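(* For $n=0,1,2,\ldots$ let $\bar H^{(2)}_n=\sum_{0<j\leqslant n}\frac{1}{(2j-1)^2}$. For every real $x$ with $0\leqslant x<2$, $$\sum_{k=1}^\infty\binom{2k}k\bar H_k^{(2)}\left(\frac x4\right)^{2k}=\frac{\arcsin^2(x/2)}{\sqrt{4-x^2}}.$$ In particular, $$\sum_{k=1}^\infty\binom{2k}k\frac{\bar H_k^{(2)}}{16^k}=\frac{\pi^2}{36\sqrt3},\qquad \sum_{k=1}^\infty\binom{2k}k\frac{\bar H_k^{(2)}}{8^k}=\frac{\pi^2}{16\sqrt2},\qquad \sum_{k=1}^\infty\binom{2k}k\frac{3^k\bar H_k^{(2)}}{16^k}=\frac{\pi^2}9.$$ *)

theory Defs
  imports "HOL-Analysis.Analysis"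
begin

definition Hbar2 :: "nat \<Rightarrow> real" where
  "Hbar2 n = (\<Sum>j\<in>{1..n}. 1 / (2 * real j - 1)^2)"

end

theory Submission
  imports Defs
begin

lemma R1: "real ((2*Suc k) choose Suc k) * (k+1) = 2*(2*k+1)*real((2*k) choose k)"
proof -
  have a: "(2*k+2) * ((2*k+1) choose k) = ((2*Suc k) choose Suc k) * (k+1)"
    using Suc_times_binomial_eq[of "2*k+1" k] by simp
  have b: "(2*k+1) * ((2*k) choose k) = ((2*k+1) choose Suc k) * (k+1)"
    using Suc_times_binomial_eq[of "2*k" k] by simp
  have c: "((2*k+1) choose Suc k) = ((2*k+1) choose k)"
    using binomial_symmetric[of k "2*k+1"] by simp
  have "((2*Suc k) choose Suc k) * (k+1) * (k+1) = (2*k+2) * (((2*k+1) choose k) * (k+1))"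
    using a by (metis mult.assoc)
  also have "\<dots> = (2*k+2) * ((2*k+1) * ((2*k) choose k))" using b c by (simp del: binomial_Suc_Suc)
  also have "\<dots> = 2*(2*k+1)*((2*k) choose k) * (k+1)" by (simp del: binomial_Suc_Suc add: algebra_simps)
  finally have "((2*Suc k) choose Suc k) * (k+1) = 2*(2*k+1)*((2*k) choose k)" by (metis mult_right_cancel add_eq_0_iff_both_eq_0 one_neq_zero)
  then have "real (((2*Suc k) choose Suc k) * (k+1)) = real (2*(2*k+1)*((2*k) choose k))" by (simp only:)
  then show ?thesis by (simp del: binomial_Suc_Suc add: algebra_simps)
qed

definition cc :: "nat \<Rightarrow> real" where "cc k = real ((2*k) choose k) / 4^k"
definition ss :: "nat \<Rightarrow> real" where "ss k = cc k / (2*k+1)"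
definition aa :: "nat \<Rightarrow> real" where "aa k = cc k * Hbar2 k"

lemma cc_rec: "cc (Suc k) * (2*k+2) = cc k * (2*k+1)"
proof -
  define N where "N = (2*Suc k) choose Suc k"
  define M where "M = (2*k) choose k"
  have R: "real N * (real k + 1) = 2*(2*real k+1)*real M" unfolding N_def M_def by (rule R1)
  have c1: "cc (Suc k) = real N / 4^Suc k" unfolding N_def cc_def by (simp only:)
  have c2: "cc k = real M / 4^k" unfolding M_def cc_def by (simp only:)
  have "cc (Suc k) * (2*k+2) = 2*(real N * (real k + 1)) / 4^Suc k" unfolding c1 by (simp add: field_simps)
  also have "\<dots> = 2*(2*(2*real k+1)*real M) / 4^Suc k" unfolding R ..
  also have "\<dots> = cc k * (2*k+1)" unfolding c2 by (simp add: field_simps)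
  finally show ?thesis .
qed

lemma cc_bounds: "0 \<le> cc k" "cc k \<le> 1"
proof -
  show "0 \<le> cc k" unfolding cc_def by simp
  have "real ((2*k) choose k) \<le> 2^(2*k)"
    using binomial_le_pow2[of "2*k" k] by (metis of_nat_le_iff of_nat_numeral of_nat_power)
  also have "(2::real)^(2*k) = 4^k" by (simp add: power_mult)
  finally show "cc k \<le> 1" unfolding cc_def by simp
qed

lemma Hbar2_bounds: "0 \<le> Hbar2 k" "Hbar2 k \<le> real k"
proof -
  have t: "0 \<le> 1 / (2 * real j - 1)^2 \<and> 1 / (2 * real j - 1)^2 \<le> 1" if "j \<in> {1..k}" for j
  proof -
    have "1 \<le> 2 * real j - 1" using that by auto
    hence "1 \<le> (2 * real j - 1)^2" by (simp add: one_le_power)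
    moreover have "0 < (2 * real j - 1)^2" using \<open>1 \<le> 2 * real j - 1\<close> by simp
    ultimately show ?thesis by (simp add: field_simps)
  qed
  show "0 \<le> Hbar2 k" unfolding Hbar2_def using t by (simp add: sum_nonneg)
  have "Hbar2 k \<le> (\<Sum>j\<in>{1..k}. 1)" unfolding Hbar2_def by (rule sum_mono) (use t in auto)
  thus "Hbar2 k \<le> real k" by simp
qed

lemma Hbar2_Suc: "Hbar2 (Suc k) = Hbar2 k + 1 / (2*real k + 1)^2"
  unfolding Hbar2_def by (simp add: algebra_simps)

lemma summable_poly_bound:
  fixes e :: "nat \<Rightarrow> real"
  assumes "\<And>k. \<bar>e k\<bar> \<le> B * (real k + 1)" "\<bar>u\<bar> < 1"
  shows "summable (\<lambda>k. e k * u^k)"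
proof -
  have s1: "summable (\<lambda>n. diffs (\<lambda>_. 1::real) n * \<bar>u\<bar> ^ n)"
    by (rule termdiff_converges[where K=1]) (use assms(2) in \<open>auto intro: summable_geometric\<close>)
  have "summable (\<lambda>n. B * ((real n + 1) * \<bar>u\<bar> ^ n))"
    using summable_mult[OF s1, of B] by (simp add: diffs_def add.commute)
  then show ?thesis
  proof (rule summable_comparison_test[rotated], intro exI allI impI)
    fix n
    have "norm (e n * u^n) = \<bar>e n\<bar> * \<bar>u\<bar>^n" by (simp add: abs_mult power_abs)
    also have "\<dots> \<le> B * (real n + 1) * \<bar>u\<bar>^n" by (rule mult_right_mono) (use assms in auto)
    finally show "norm (e n * u^n) \<le> B * ((real n + 1) * \<bar>u\<bar> ^ n)" by simp
  qed
qed

lemma cc_summ: "\<bar>u\<bar> < 1 \<Longrightarrow> summable (\<lambda>k. cc k * u^k)"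
proof (rule summable_poly_bound[where B=1])
  fix k
  have "\<bar>cc k\<bar> \<le> 1" using cc_bounds[of k] by simp
  thus "\<bar>cc k\<bar> \<le> 1 * (real k + 1)" by simp
qed
lemma ss_summ: "\<bar>u\<bar> < 1 \<Longrightarrow> summable (\<lambda>k. ss k * u^k)"
proof (rule summable_poly_bound[where B=1])
  fix k
  have "\<bar>ss k\<bar> = cc k / (2*k+1)" unfolding ss_def using cc_bounds[of k] by simp
  also have "\<dots> \<le> cc k"
  proof -
    have "cc k * 1 \<le> cc k * (2*real k + 1)" by (rule mult_left_mono) (use cc_bounds in auto)
    thus ?thesis by (simp add: divide_le_eq add.commute)
  qed
  finally show "\<bar>ss k\<bar> \<le> 1 * (real k + 1)" using cc_bounds[of k] by simp
qed
lemma aa_summ: "\<bar>u\<bar> < 1 \<Longrightarrow> summable (\<lambda>k. aa k * u^k)"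
proof (rule summable_poly_bound[where B=1])
  fix k
  have "\<bar>aa k\<bar> = cc k * Hbar2 k" unfolding aa_def using cc_bounds Hbar2_bounds by simp
  also have "\<dots> \<le> 1 * real k" by (rule mult_mono) (use cc_bounds Hbar2_bounds in auto)
  finally show "\<bar>aa k\<bar> \<le> 1 * (real k + 1)" by simp
qed

lemma ps_times_u:
  fixes e :: "nat \<Rightarrow> real"
  assumes "summable (\<lambda>k. diffs e k * u^k)"
  shows "(\<lambda>k. real k * e k * u^k) sums (u * (\<Sum>k. diffs e k * u^k))"
proof -
  have "(\<lambda>k. u * (diffs e k * u^k)) sums (u * (\<Sum>k. diffs e k * u^k))"
    by (rule sums_mult) (use assms summable_sums in blast)
  moreover have "(\<lambda>k. u * (diffs e k * u^k)) = (\<lambda>k. (\<lambda>n. real n * e n * u^n) (Suc k))"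
    by (auto simp: diffs_def algebra_simps)
  ultimately have "(\<lambda>k. (\<lambda>n. real n * e n * u^n) (Suc k)) sums (u * (\<Sum>k. diffs e k * u^k))" by simp
  then have "(\<lambda>n. real n * e n * u^n) sums (u * (\<Sum>k. diffs e k * u^k) + real 0 * e 0 * u^0)"
    by (rule sums_Suc_iff[THEN iffD1])
  then show ?thesis by simp
qed

lemma ps_deriv:
  fixes e :: "nat \<Rightarrow> real"
  assumes "\<And>u. \<bar>u\<bar> < 1 \<Longrightarrow> summable (\<lambda>k. e k * u^k)" "\<bar>u\<bar> < 1"
  shows "((\<lambda>u. \<Sum>k. e k * u^k) has_real_derivative (\<Sum>k. diffs e k * u^k)) (at u)"
     and "summable (\<lambda>k. diffs e k * u^k)"
  using termdiffs_strong'[of 1 e u] termdiff_converges[of u 1 e] assms by auto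


lemma const_on:
  fixes g :: "real \<Rightarrow> real"
  assumes "\<And>t. -1 < t \<Longrightarrow> t < 1 \<Longrightarrow> (g has_real_derivative 0) (at t)" "-1 < t" "t < 1"
  shows "g t = g 0"
proof -
  obtain c where "\<forall>x\<in>{-1<..<1::real}. g x = c"
    using has_field_derivative_zero_constant[of "{-1<..<1::real}" g]
    using assms(1) has_field_derivative_at_within by fastforce
  then show ?thesis using assms(2,3) by auto
qed

lemma sums_zero_unique: assumes "f sums S" "\<And>k. f k = 0" shows "S = (0::real)"
proof -
  have "f = (\<lambda>_. 0)" using assms(2) by auto
  with assms(1) have "(\<lambda>_. 0::real) sums S" by simp
  thus ?thesis using sums_zero sums_unique2 by blast
qed

definition "Cs u = (\<Sum>k. cc k * u^k)"
definition "Dc u = (\<Sum>k. diffs cc k * u^k)"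
definition "Ss u = (\<Sum>k. ss k * u^k)"
definition "Ds u = (\<Sum>k. diffs ss k * u^k)"
definition "Fs u = (\<Sum>k. aa k * u^k)"
definition "Da u = (\<Sum>k. diffs aa k * u^k)"

lemma E1: assumes "\<bar>u\<bar> < 1" shows "2*Dc u - 2*u*Dc u - Cs u = 0"
proof -
  have sd: "summable (\<lambda>k. diffs cc k * u^k)" using ps_deriv(2)[OF cc_summ assms] .
  have d: "(\<lambda>k. diffs cc k * u^k) sums Dc u" unfolding Dc_def using sd summable_sums by blast
  have m: "(\<lambda>k. real k * cc k * u^k) sums (u*Dc u)" unfolding Dc_def using ps_times_u[OF sd] .
  have c: "(\<lambda>k. cc k * u^k) sums Cs u" unfolding Cs_def using cc_summ[OF assms] summable_sums by blast
  have "(\<lambda>k. 2*(diffs cc k * u^k) - 2*(real k * cc k * u^k) - cc k * u^k) sums (2*Dc u - 2*(u*Dc u) - Cs u)"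
    by (intro sums_diff sums_mult d m c)
  then have "2*Dc u - 2*(u*Dc u) - Cs u = 0"
  proof (rule sums_zero_unique)
    fix k
    have "diffs cc k = cc (Suc k) * (2*k+2) / 2" by (simp add: diffs_def algebra_simps)
    also have "\<dots> = cc k * (2*k+1) / 2" by (simp only: cc_rec)
    finally have e: "diffs cc k = cc k * (2*k+1) / 2" .
    show "2*(diffs cc k * u^k) - 2*(real k * cc k * u^k) - cc k * u^k = 0"
      unfolding e by (simp add: algebra_simps)
  qed
  then show ?thesis by simp
qed

lemma E2: assumes "\<bar>u\<bar> < 1" shows "Ss u + 2*u*Ds u = Cs u"
proof -
  have sd: "summable (\<lambda>k. diffs ss k * u^k)" using ps_deriv(2)[OF ss_summ assms] .
  have m: "(\<lambda>k. real k * ss k * u^k) sums (u*Ds u)" unfolding Ds_def using ps_times_u[OF sd] .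
  have c: "(\<lambda>k. cc k * u^k) sums Cs u" unfolding Cs_def using cc_summ[OF assms] summable_sums by blast
  have s: "(\<lambda>k. ss k * u^k) sums Ss u" unfolding Ss_def using ss_summ[OF assms] summable_sums by blast
  have "(\<lambda>k. ss k * u^k + 2*(real k * ss k * u^k) - cc k * u^k) sums (Ss u + 2*(u*Ds u) - Cs u)"
    by (intro sums_diff sums_add sums_mult m c s)
  then have "Ss u + 2*(u*Ds u) - Cs u = 0"
  proof (rule sums_zero_unique)
    fix k
    have "ss k * (2*k+1) = cc k" unfolding ss_def by (simp add: field_simps)
    then show "ss k * u^k + 2*(real k * ss k * u^k) - cc k * u^k = 0"
      by (simp add: algebra_simps) (metis distrib_left mult.commute mult.left_commute)
  qed
  then show ?thesis by simp
qed

lemma aa_rec: "aa (Suc k) * (2*k+2) = cc k * (2*k+1) * Hbar2 k + ss k"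
proof -
  have "aa (Suc k) * (2*k+2) = (cc (Suc k) * (2*k+2)) * Hbar2 (Suc k)" unfolding aa_def by simp
  also have "\<dots> = cc k * (2*k+1) * (Hbar2 k + 1/(2*real k+1)^2)" by (simp only: cc_rec Hbar2_Suc)
  also have "\<dots> = cc k * (2*k+1) * Hbar2 k + ss k"
  proof -
    have h: "2*real k+1 > 0" by simp
    have "cc k * (2*k+1) * (1/(2*real k+1)^2) = cc k / (2*k+1)"
      using h by (simp add: power2_eq_square add.commute)
    thus ?thesis unfolding ss_def by (simp add: distrib_left)
  qed
  finally show ?thesis .
qed

lemma E3: assumes "\<bar>u\<bar> < 1" shows "2*Da u - 2*u*Da u - Fs u = Ss u"
proof -
  have sd: "summable (\<lambda>k. diffs aa k * u^k)" using ps_deriv(2)[OF aa_summ assms] .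
  have d: "(\<lambda>k. diffs aa k * u^k) sums Da u" unfolding Da_def using sd summable_sums by blast
  have m: "(\<lambda>k. real k * aa k * u^k) sums (u*Da u)" unfolding Da_def using ps_times_u[OF sd] .
  have c: "(\<lambda>k. aa k * u^k) sums Fs u" unfolding Fs_def using aa_summ[OF assms] summable_sums by blast
  have s: "(\<lambda>k. ss k * u^k) sums Ss u" unfolding Ss_def using ss_summ[OF assms] summable_sums by blast
  have "(\<lambda>k. 2*(diffs aa k * u^k) - 2*(real k * aa k * u^k) - aa k * u^k - ss k * u^k) sums (2*Da u - 2*(u*Da u) - Fs u - Ss u)"
    by (intro sums_diff sums_mult d m c s)
  then have "2*Da u - 2*(u*Da u) - Fs u - Ss u = 0"
  proof (rule sums_zero_unique)
    fix k
    have "diffs aa k = aa (Suc k) * (2*k+2) / 2" by (simp add: diffs_def algebra_simps)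
    also have "\<dots> = (cc k * (2*k+1) * Hbar2 k + ss k) / 2" by (simp only: aa_rec)
    finally have e: "diffs aa k = (cc k * (2*k+1) * Hbar2 k + ss k) / 2" .
    have f: "aa k = cc k * Hbar2 k" by (simp add: aa_def)
    show "2*(diffs aa k * u^k) - 2*(real k * aa k * u^k) - aa k * u^k - ss k * u^k = 0"
      unfolding e f by (simp add: algebra_simps)
  qed
  then show ?thesis by simp
qed


lemma deriv_sq: "((\<lambda>t::real. t^2) has_real_derivative 2*t) (at t)"
  using DERIV_pow[of 2 t UNIV] by simp

lemma deriv_sqrt1: assumes "-1 < t" "t < 1"
  shows "((\<lambda>t. sqrt (1 - t^2)) has_real_derivative (- t / sqrt (1 - t^2))) (at t)"
proof -
  have p: "0 < 1 - t^2" using assms by (simp add: abs_square_less_1 abs_less_iff)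
  have d: "((\<lambda>t. 1 - t^2) has_real_derivative 0 - 2*t) (at t)"
    by (rule DERIV_diff[OF DERIV_const deriv_sq])
  show ?thesis
    by (rule DERIV_cong[OF DERIV_chain2[OF DERIV_real_sqrt[OF p] d]]) (use p in \<open>simp add: field_simps\<close>)
qed

lemma deriv_comp_sq:
  assumes "\<And>u. \<bar>u\<bar> < 1 \<Longrightarrow> summable (\<lambda>k. e k * u^k)" "-1 < t" "t < 1"
  shows "((\<lambda>t. \<Sum>k. e k * (t^2)^k) has_real_derivative ((\<Sum>k. diffs e k * (t^2)^k) * (2*t))) (at t)"
proof -
  have a: "\<bar>t^2\<bar> < 1" using assms(2,3) by (simp add: abs_square_less_1 abs_less_iff)
  from DERIV_chain2[OF ps_deriv(1)[OF assms(1) a] deriv_sq] show ?thesis .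
qed


lemma sq_lt1: "-1 < t \<Longrightarrow> t < 1 \<Longrightarrow> \<bar>(t::real)^2\<bar> < 1"
  by (simp add: abs_square_less_1 abs_less_iff)

lemma stepC: assumes "-1 < t" "t < 1" shows "sqrt (1 - t^2) * Cs (t^2) = 1"
proof -
  let ?g = "\<lambda>t. sqrt (1 - t^2) * Cs (t^2)"
  have "?g t = ?g 0"
  proof (rule const_on[OF _ assms])
    fix t :: real assume t: "-1 < t" "t < 1"
    define r where "r = sqrt (1 - t^2)"
    have p: "0 < 1 - t^2" using t by (simp add: abs_square_less_1 abs_less_iff)
    have r: "r > 0" "r * r = 1 - t^2" unfolding r_def using p by auto
    have e1: "2*Dc (t^2) - 2*t^2*Dc (t^2) - Cs (t^2) = 0" by (rule E1[OF sq_lt1[OF t]])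
    have "(?g has_real_derivative (- t / r) * Cs (t^2) + (Dc (t^2) * (2*t)) * r) (at t)"
      using DERIV_mult[OF deriv_sqrt1[OF t] deriv_comp_sq[OF cc_summ t]]
      unfolding Cs_def Dc_def r_def by (simp add: algebra_simps)
    moreover have "(- t / r) * Cs (t^2) + (Dc (t^2) * (2*t)) * r = 0"
    proof -
      have "(- t / r) * Cs (t^2) + (Dc (t^2) * (2*t)) * r
          = t * (2*Dc (t^2) * (r*r) - Cs (t^2)) / r" using r by (simp add: field_simps)
      also have "\<dots> = 0"
      proof -
        have z: "2*Dc (t^2) * (1 - t^2) - Cs (t^2) = 0" using e1 by (simp add: right_diff_distrib mult.commute mult.left_commute)
        show ?thesis unfolding r(2) z by simp
      qed
      finally show ?thesis .
    qed
    ultimately show "(?g has_real_derivative 0) (at t)" by simp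
  qed
  also have "?g 0 = 1"
  proof -
    have "Cs 0 = cc 0" unfolding Cs_def by (rule powser_zero)
    thus ?thesis by (simp add: cc_def)
  qed
  finally show ?thesis .
qed


lemma stepS: assumes "-1 < t" "t < 1" shows "t * Ss (t^2) = arcsin t"
proof -
  let ?g = "\<lambda>t. t * Ss (t^2) - arcsin t"
  have "?g t = ?g 0"
  proof (rule const_on[OF _ assms])
    fix t :: real assume t: "-1 < t" "t < 1"
    define r where "r = sqrt (1 - t^2)"
    have p: "0 < 1 - t^2" using t by (simp add: abs_square_less_1 abs_less_iff)
    have r: "r > 0" unfolding r_def using p by auto
    have c: "Cs (t^2) = inverse r" using stepC[OF t] r unfolding r_def by (simp add: field_simps)
    have e2: "Ss (t^2) + 2*t^2*Ds (t^2) = Cs (t^2)" by (rule E2[OF sq_lt1[OF t]])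
    have "(?g has_real_derivative (1 * Ss (t^2) + (Ds (t^2) * (2*t)) * t) - inverse r) (at t)"
      using DERIV_diff[OF DERIV_mult[OF DERIV_ident deriv_comp_sq[OF ss_summ t]] DERIV_arcsin[OF t]]
      unfolding Ss_def Ds_def r_def by simp
    moreover have "(1 * Ss (t^2) + (Ds (t^2) * (2*t)) * t) - inverse r = 0"
      using e2 c by (simp add: algebra_simps power2_eq_square)
    ultimately show "(?g has_real_derivative 0) (at t)" by simp
  qed
  also have "?g 0 = 0" by simp
  finally show ?thesis by simp
qed

lemma stepF: assumes "-1 < t" "t < 1" shows "Fs (t^2) = arcsin t ^ 2 / (2 * sqrt (1 - t^2))"
proof -
  let ?g = "\<lambda>t. sqrt (1 - t^2) * Fs (t^2) - (1/2) * arcsin t ^ 2"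
  have "?g t = ?g 0"
  proof (rule const_on[OF _ assms])
    fix t :: real assume t: "-1 < t" "t < 1"
    define r where "r = sqrt (1 - t^2)"
    have p: "0 < 1 - t^2" using t by (simp add: abs_square_less_1 abs_less_iff)
    have r: "r > 0" "r * r = 1 - t^2" unfolding r_def using p by auto
    have e3: "2*Da (t^2) - 2*t^2*Da (t^2) - Fs (t^2) = Ss (t^2)" by (rule E3[OF sq_lt1[OF t]])
    have as: "arcsin t = t * Ss (t^2)" using stepS[OF t] by simp
    have da: "((\<lambda>x. arcsin x ^ 2) has_real_derivative 2 * arcsin t * inverse r) (at t)"
      using DERIV_chain2[OF DERIV_pow[of 2] DERIV_arcsin[OF t]] unfolding r_def by simp
    have "(?g has_real_derivative (- t / r) * Fs (t^2) + (Da (t^2) * (2*t)) * r - (1/2) * (2 * arcsin t * inverse r)) (at t)"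
      using DERIV_diff[OF DERIV_mult[OF deriv_sqrt1[OF t] deriv_comp_sq[OF aa_summ t]] DERIV_cmult[OF da, of "1/2"]]
      unfolding Fs_def Da_def r_def by (simp add: algebra_simps)
    moreover have "(- t / r) * Fs (t^2) + (Da (t^2) * (2*t)) * r - (1/2) * (2 * arcsin t * inverse r) = 0"
    proof -
      have "(- t / r) * Fs (t^2) + (Da (t^2) * (2*t)) * r - (1/2) * (2 * arcsin t * inverse r)
          = t * (2*Da (t^2) * (r*r) - Fs (t^2) - Ss (t^2)) / r" using r(1) unfolding as by (simp add: field_simps)
      also have "\<dots> = 0"
      proof -
        have z: "2*Da (t^2) * (1 - t^2) - Fs (t^2) - Ss (t^2) = 0" using e3 by (simp add: right_diff_distrib mult.commute mult.left_commute)
        show ?thesis unfolding r(2) z by simp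
      qed
      finally show ?thesis .
    qed
    ultimately show "(?g has_real_derivative 0) (at t)" by simp
  qed
  also have "?g 0 = 0"
  proof -
    have "Fs 0 = aa 0" unfolding Fs_def by (rule powser_zero)
    thus ?thesis by (simp add: aa_def Hbar2_def)
  qed
  finally have "sqrt (1 - t^2) * Fs (t^2) = arcsin t ^ 2 / 2" by simp
  moreover have "sqrt (1 - t^2) > 0" using assms by (simp add: abs_square_less_1 abs_less_iff)
  ultimately show ?thesis by (simp add: field_simps)
qed


lemma main_sums:
  fixes x :: real assumes "0 \<le> x" "x < 2"
  shows "(\<lambda>k. real ((2*(k+1)) choose (k+1)) * Hbar2 (k+1) * (x/4)^(2*(k+1)))
             sums ((arcsin (x/2))^2 / sqrt (4 - x^2))"
proof -
  define t where "t = x/2"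
  have t: "-1 < t" "t < 1" using assms unfolding t_def by auto
  have s: "(\<lambda>k. aa k * (t^2)^k) sums Fs (t^2)" unfolding Fs_def
    using aa_summ[OF sq_lt1[OF t]] summable_sums by blast
  have s2: "(\<lambda>k. aa (Suc k) * (t^2)^(Suc k)) sums Fs (t^2)"
    using s sums_Suc_iff[of "\<lambda>k. aa k * (t^2)^k" "Fs (t^2)"] by (simp add: aa_def Hbar2_def)
  have tm: "real ((2*(k+1)) choose (k+1)) * Hbar2 (k+1) * (x/4)^(2*(k+1)) = aa (Suc k) * (t^2)^(Suc k)" for k
  proof -
    have "(x/4)^(2*n) = (t^2)^n / 4^n" for n
    proof -
      have h: "(16::real)^n = 4^n*4^n" by (simp add: power_mult_distrib[symmetric])
      show ?thesis unfolding t_def by (simp add: power_mult power_divide h)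
    qed
    hence h2: "(x/4)^(2*(k+1)) = (t^2)^(k+1) / 4^(k+1)" .
    show ?thesis unfolding aa_def cc_def Suc_eq_plus1 h2 by (simp del: binomial_Suc_Suc)
  qed
  have v: "Fs (t^2) = (arcsin (x/2))^2 / sqrt (4 - x^2)"
  proof -
    have "sqrt (4 - x^2) = 2 * sqrt (1 - t^2)"
    proof -
      have "4 - x^2 = 4 * (1 - t^2)" unfolding t_def by (simp add: power_divide)
      thus ?thesis by (simp only: real_sqrt_mult real_sqrt_four)
    qed
    thus ?thesis using stepF[OF t] unfolding t_def by simp
  qed
  show ?thesis using s2 unfolding tm v .
qed

theorem corollary1p2:
  shows "(\<forall>x::real. 0 \<le> x \<and> x < 2 \<longrightarrow>
           (\<lambda>k. real ((2*(k+1)) choose (k+1)) * Hbar2 (k+1) * (x/4)^(2*(k+1)))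
             sums ((arcsin (x/2))^2 / sqrt (4 - x^2)))
       \<and> (\<lambda>k. real ((2*(k+1)) choose (k+1)) * Hbar2 (k+1) / 16^(k+1))
             sums (pi^2 / (36 * sqrt 3))
       \<and> (\<lambda>k. real ((2*(k+1)) choose (k+1)) * Hbar2 (k+1) / 8^(k+1))
             sums (pi^2 / (16 * sqrt 2))
       \<and> (\<lambda>k. real ((2*(k+1)) choose (k+1)) * 3^(k+1) * Hbar2 (k+1) / 16^(k+1))
             sums (pi^2 / 9)"
proof (intro conjI allI impI)
  fix x :: real assume "0 \<le> x \<and> x < 2"
  thus "(\<lambda>k. real ((2*(k+1)) choose (k+1)) * Hbar2 (k+1) * (x/4)^(2*(k+1)))
             sums ((arcsin (x/2))^2 / sqrt (4 - x^2))" using main_sums by blast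
next
  have a: "arcsin (1/2) = pi/6" using arcsin_sin[of "pi/6"] sin_30 by simp
  have e: "(\<lambda>k. real ((2*(k+1)) choose (k+1)) * Hbar2 (k+1) * (1/4)^(2*(k+1))) =
           (\<lambda>k. real ((2*(k+1)) choose (k+1)) * Hbar2 (k+1) / 16^(k+1))"
    by (simp add: power_mult power_divide)
  have v: "(arcsin (1/2))^2 / sqrt (4 - 1^2) = pi^2 / (36 * sqrt 3)"
    unfolding a by (simp add: power_divide)
  show "(\<lambda>k. real ((2*(k+1)) choose (k+1)) * Hbar2 (k+1) / 16^(k+1)) sums (pi^2 / (36 * sqrt 3))"
    using main_sums[of 1] unfolding e v by simp
next
  have a: "arcsin (sqrt 2/2) = pi/4" using arcsin_sin[of "pi/4"] sin_45 by simp
  have e: "(\<lambda>k. real ((2*(k+1)) choose (k+1)) * Hbar2 (k+1) * (sqrt 2/4)^(2*(k+1))) =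
           (\<lambda>k. real ((2*(k+1)) choose (k+1)) * Hbar2 (k+1) / 8^(k+1))"
    by (simp add: power_mult power_divide)
  have v: "(arcsin (sqrt 2/2))^2 / sqrt (4 - (sqrt 2)^2) = pi^2 / (16 * sqrt 2)"
    unfolding a by (simp add: power_divide)
  have "sqrt 2 < 2" by (rule real_less_lsqrt) auto
  then show "(\<lambda>k. real ((2*(k+1)) choose (k+1)) * Hbar2 (k+1) / 8^(k+1)) sums (pi^2 / (16 * sqrt 2))"
    using main_sums[of "sqrt 2"] unfolding e v by simp
next
  have a: "arcsin (sqrt 3/2) = pi/3" using arcsin_sin[of "pi/3"] sin_60 by simp
  have e: "(\<lambda>k. real ((2*(k+1)) choose (k+1)) * Hbar2 (k+1) * (sqrt 3/4)^(2*(k+1))) =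
           (\<lambda>k. real ((2*(k+1)) choose (k+1)) * 3^(k+1) * Hbar2 (k+1) / 16^(k+1))"
  proof -
    have h: "(sqrt 3/4)^2 = 3/16" by (simp add: power_divide)
    show ?thesis by (simp only: power_mult h) (simp add: power_divide mult_ac)
  qed
  have v: "(arcsin (sqrt 3/2))^2 / sqrt (4 - (sqrt 3)^2) = pi^2 / 9"
    unfolding a by (simp add: power_divide)
  have "sqrt 3 < 2" by (rule real_less_lsqrt) auto
  then show "(\<lambda>k. real ((2*(k+1)) choose (k+1)) * 3^(k+1) * Hbar2 (k+1) / 16^(k+1)) sums (pi^2 / 9)"
    using main_sums[of "sqrt 3"] unfolding e v by simp
qed

end
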